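(* Let $\mathcal{A}$ be a finite or countable alphabet, $\mathcal{M}$ a countable set of probability measures on $\mathcal{A}^\infty$, $w:\mathcal{M}\to(0,1]$ a prior with $\sum_\nu w_\nu=1$, and $\xi$ the Bayes mixture. Let $\nu\in\mathcal{M}$ and let $I$ be a stopping interval. Then $$\mathbb{E}_\nu\sum_{t\in I}d_t(\nu,\xi)\le\sum_{x\in\mathcal{A}(I)}\nu(x)\left(\ln\frac1{w_\nu}+\ln\frac{\xi(x)}{\nu(x)}\right).$$
   Context: $\mathcal{A}^\infty$ carries the filtration $\mathcal{F}_{<t}:=\sigma(\{\Gamma_x:x\in\mathcal{A}^{t-1}\})$, $\Gamma_x=\{x\omega:\omega\in\mathcal{A}^\infty\}$; for a measure $\rho$, $\rho(x):=\rho(\Gamma_x)$, $\rho(y|x):=\rho(xy)/\rho(x)$. Bayes mixture $\xi(A):=\sum_\nu w_\nu\nu(A)$. Natural logs. $d_t(\nu,\xi)(\omega):=\sum_a\nu(a|\omega_{<t})\ln\frac{\nu(a|\omega_{<t})}{\xi(a|\omega_{<t})}$ with $\omega_{<t}=\omega_1\cdots\omega_{t-1}$. A stopping time is $t:\mathcal{A}^\infty\to\mathbb{N}\cup\{\infty\}$ with $t^{-1}(n)$ $\mathcal{F}_{<n}$-measurable for all $n$; for it, $\mathcal{A}(t):=\{x\in\mathcal{A}^*: t(x\omega)=\ell(x)+1\ \forall\omega\}$, $\ell(x)$ the length of $x$. If $t\le t'$ are stopping times, $I(\omega):=[t(\omega),t'(\omega))$ is a stopping interval and $\mathcal{A}(I):=\mathcal{A}(t)$.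 Terms with $\nu(x)=0$ in the right-hand sum are taken to be $0$. *)

theory Defs
  imports "HOL-Probability.Probability"
begin

abbreviation seqS :: "'a::countable stream measure" where
  "seqS \<equiv> stream_space (count_space UNIV)"

definition cyl :: "'a list \<Rightarrow> 'a stream set" where
  "cyl x = {\<omega>. stake (length x) \<omega> = x}"

definition mcyl :: "'a stream measure \<Rightarrow> 'a list \<Rightarrow> real" where
  "mcyl \<rho> x = measure \<rho> (cyl x)"

definition xi :: "'a stream measure set \<Rightarrow> ('a stream measure \<Rightarrow> real) \<Rightarrow> 'a stream set \<Rightarrow> real" where
  "xi Ms w A = (\<Sum>\<^sub>\<infinity>\<nu>\<in>Ms. w \<nu> * measure \<nu> A)"

definition xicyl :: "'a stream measure set \<Rightarrow> ('a stream measure \<Rightarrow> real) \<Rightarrow> 'a list \<Rightarrow> real" where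
  "xicyl Ms w x = xi Ms w (cyl x)"

definition cond :: "('a list \<Rightarrow> real) \<Rightarrow> 'a list \<Rightarrow> 'a list \<Rightarrow> real" where
  "cond \<rho> y x = \<rho> (x @ y) / \<rho> x"

text \<open>d_t(nu,xi)(omega), with omega_{<t} = stake (t-1) omega.\<close>
definition dKL :: "'a::countable stream measure set \<Rightarrow> ('a stream measure \<Rightarrow> real) \<Rightarrow> 'a stream measure
    \<Rightarrow> nat \<Rightarrow> 'a stream \<Rightarrow> real" where
  "dKL Ms w \<nu> t \<omega> =
     (\<Sum>\<^sub>\<infinity>a\<in>UNIV. cond (mcyl \<nu>) [a] (stake (t - 1) \<omega>) *
        ln (cond (mcyl \<nu>) [a] (stake (t - 1) \<omega>) / cond (xicyl Ms w) [a] (stake (t - 1) \<omega>)))"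

definition Flt :: "nat \<Rightarrow> 'a stream set set" where
  "Flt n = sigma_sets UNIV {cyl x | x. length x = n - 1}"

definition stopping_time :: "('a stream \<Rightarrow> enat) \<Rightarrow> bool" where
  "stopping_time t \<longleftrightarrow> (\<forall>\<omega>. 1 \<le> t \<omega>) \<and>
     (\<forall>n::nat. 1 \<le> n \<longrightarrow> t -` {enat n} \<in> Flt n)"

definition Aset :: "('a stream \<Rightarrow> enat) \<Rightarrow> 'a list set" where
  "Aset t = {x. \<forall>\<omega>. t (x @- \<omega>) = enat (length x + 1)}"

end

theory Submission
  imports Defs
begin


lemma infsum_nn_count:
  fixes f :: "'i \<Rightarrow> ennreal"
  assumes "countable I"
  shows "infsum f I = (\<integral>\<^sup>+ i. f i \<partial>count_space I)"
proof (cases "finite I")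
  case True
  then show ?thesis by (simp add: nn_integral_count_space_finite)
next
  case False
  note * = bij_betw_from_nat_into[OF assms False]
  have "(\<integral>\<^sup>+ i. f i \<partial>count_space I) = (\<integral>\<^sup>+ n. f (from_nat_into I n) \<partial>count_space UNIV)"
    by (simp add: nn_integral_bij_count_space[symmetric, OF *])
  also have "\<dots> = (\<Sum>n. f (from_nat_into I n))" by (rule nn_integral_count_space_nat)
  also have "\<dots> = infsum (\<lambda>n. f (from_nat_into I n)) UNIV"
  proof -
    have "((\<lambda>n. f (from_nat_into I n)) has_sum infsum (\<lambda>n. f (from_nat_into I n)) UNIV) UNIV"
      by (rule has_sum_infsum) (simp add: nonneg_summable_on_complete)
    then have "(\<lambda>n. f (from_nat_into I n)) sums infsum (\<lambda>n. f (from_nat_into I n)) UNIV"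
      by (rule has_sum_imp_sums)
    then show ?thesis by (rule sums_unique[symmetric])
  qed
  also have "\<dots> = infsum f I" by (rule infsum_reindex_bij_betw[OF *])
  finally show ?thesis ..
qed

lemma ennreal_infsum_real:
  fixes f :: "'i \<Rightarrow> real"
  assumes "f summable_on A" "\<And>x. x \<in> A \<Longrightarrow> 0 \<le> f x"
  shows "ennreal (infsum f A) = infsum (\<lambda>x. ennreal (f x)) A"
proof -
  have "ennreal (infsum f A) = (SUP F\<in>{F. finite F \<and> F \<subseteq> A}. (ennreal (sum f F)))"
    by (rule infsum_nonneg_is_SUPREMUM_ennreal[OF assms])
  also have "\<dots> = (SUP F\<in>{F. finite F \<and> F \<subseteq> A}. (\<Sum>x\<in>F. ennreal (f x)))"
    using assms(2) by (intro SUP_cong refl) (auto intro!: sum_ennreal[symmetric])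
  also have "\<dots> = infsum (\<lambda>x. ennreal (f x)) A"
    by (rule nonneg_infsum_complete[symmetric]) simp
  finally show ?thesis .
qed

lemma ennreal_infsum_ge_sum:
  fixes f :: "'i \<Rightarrow> ennreal"
  assumes "finite F" "F \<subseteq> A"
  shows "sum f F \<le> infsum f A"
proof -
  have "infsum f A = (SUP F\<in>{F. finite F \<and> F \<subseteq> A}. sum f F)"
    by (rule nonneg_infsum_complete) simp
  then show ?thesis using assms by (auto intro: SUP_upper)
qed

lemma ennreal_infsum_ge_single:
  fixes f :: "'i \<Rightarrow> ennreal"
  assumes "a \<in> A"
  shows "f a \<le> infsum f A"
  using ennreal_infsum_ge_sum[of "{a}" A f] assms by simp

lemma real_has_sum_from_ennreal:
  fixes f :: "'i \<Rightarrow> real"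
  assumes nn: "\<And>x. x \<in> A \<Longrightarrow> 0 \<le> f x" and eq: "infsum (\<lambda>x. ennreal (f x)) A = ennreal c"
    and c: "0 \<le> c"
  shows "(f has_sum c) A"
proof -
  have "bdd_above (sum f ` {F. F\<subseteq>A \<and> finite F})"
  proof (rule bdd_aboveI)
    fix y assume "y \<in> sum f ` {F. F\<subseteq>A \<and> finite F}"
    then obtain F where F: "F \<subseteq> A" "finite F" "y = sum f F" by auto
    have "ennreal (sum f F) = (\<Sum>x\<in>F. ennreal (f x))"
      using F nn by (intro sum_ennreal[symmetric]) auto
    also have "\<dots> \<le> ennreal c" using ennreal_infsum_ge_sum[OF F(2) F(1), of "\<lambda>x. ennreal (f x)"] eq by simp
    finally show "y \<le> c" using F c by simp
  qed
  then have sm: "f summable_on A" using nonneg_bdd_above_summable_on[of A f] nn by blast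
  have "ennreal (infsum f A) = ennreal c" using ennreal_infsum_real[OF sm nn] eq by simp
  moreover have "0 \<le> infsum f A" using nn by (rule infsum_nonneg)
  ultimately have "infsum f A = c" using c by simp
  then show ?thesis using sm by (metis has_sum_infsum)
qed



lemma has_sum_diff_real:
  fixes f g :: "'b \<Rightarrow> real"
  assumes "(f has_sum a) A" "(g has_sum b) A"
  shows "((\<lambda>x. f x - g x) has_sum (a - b)) A"
  using has_sum_add[OF assms(1) has_sum_cmult_right[OF assms(2), of "-1"]] by simp

lemma xlnx_ge: fixes u v :: real assumes "0 < u" "0 < v" shows "u - v \<le> u * ln (u / v)"
proof -
  have "ln (v / u) \<le> v / u - 1" using assms by (intro ln_le_minus_one) simp
  moreover have "ln (u / v) = - ln (v / u)" using assms by (simp add: ln_div)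
  ultimately have "1 - v / u \<le> ln (u / v)" by simp
  then have "u * (1 - v / u) \<le> u * ln (u / v)" using assms by (intro mult_left_mono) auto
  then show ?thesis using assms by (simp add: algebra_simps)
qed

lemma G_alt:
  fixes n X :: real assumes "0 < W" "0 < n" "W * n \<le> X"
  shows "n * (ln (1 / W) + ln (X / n)) = n * ln (X / (W * n))" and "0 \<le> n * ln (X / (W * n))"
proof -
  have X: "0 < X" using assms by (metis mult_pos_pos order_less_le_trans)
  show "n * (ln (1 / W) + ln (X / n)) = n * ln (X / (W * n))"
    using assms X by (simp add: ln_div ln_mult)
  have "1 \<le> X / (W * n)" using assms by simp
  then show "0 \<le> n * ln (X / (W * n))" using assms by simp
qed

lemma kl_step:
  fixes n X :: "'a list \<Rightarrow> real" and W :: real and p :: "'a list"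
  assumes W: "0 < W"
    and nn: "\<And>x. 0 \<le> n x" and dom: "\<And>x. W * n x \<le> X x"
    and child: "\<And>a. n (p @ [a]) \<le> n p"
    and hn: "((\<lambda>a. n (p @ [a])) has_sum n p) UNIV"
    and hX: "((\<lambda>a. X (p @ [a])) has_sum X p) UNIV"
  defines "G \<equiv> \<lambda>x. if n x = 0 then 0 else n x * (ln (1 / W) + ln (X x / n x))"
  defines "D \<equiv> (\<Sum>\<^sub>\<infinity>a. cond n [a] p * ln (cond n [a] p / cond X [a] p))"
  shows "((\<lambda>a. G (p @ [a])) has_sum (G p - n p * D)) UNIV \<and> 0 \<le> D"
proof (cases "n p = 0")
  case True
  then have z: "n (p @ [a]) = 0" for a using child[of a] nn[of "p @ [a]"] by simp
  have "D = 0" unfolding D_def cond_def by (simp add: z True)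
  then show ?thesis by (simp add: G_def z True)
next
  case False
  then have np: "0 < n p" using nn[of p] by simp
  have Xnn: "0 \<le> X x" for x using dom[of x] nn[of x] W by (metis mult_nonneg_nonneg less_le order_trans)
  have Xp: "0 < X p" using dom[of p] np W by (metis mult_pos_pos order_less_le_trans)
  define K where "K = ln (X p / (W * n p))"
  define t where "t a = cond n [a] p * ln (cond n [a] p / cond X [a] p)" for a
  have Gp: "G p = n p * K" using np G_alt(1)[OF W np dom[of p]] by (simp add: G_def K_def)
  have key: "n p * t a = n (p @ [a]) * K - G (p @ [a])" for a
  proof (cases "n (p @ [a]) = 0")
    case True
    then show ?thesis by (simp add: t_def cond_def G_def)
  next
    case False
    then have npa: "0 < n (p @ [a])" using nn[of "p @ [a]"] by simp
    have Xpa: "0 < X (p @ [a])" using dom[of "p @ [a]"] npa W by (metis mult_pos_pos order_less_le_trans)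
    have "n p * t a = n (p @ [a]) * ln ((n (p @ [a]) / n p) / (X (p @ [a]) / X p))"
      using np by (simp add: t_def cond_def)
    also have "\<dots> = n (p @ [a]) * K - G (p @ [a])"
      using np npa Xp Xpa W False
      by (simp add: K_def G_def ln_div ln_mult algebra_simps)
    finally show ?thesis .
  qed
  have ineq: "n (p @ [a]) - n p * X (p @ [a]) / X p \<le> n (p @ [a]) * K - G (p @ [a])" for a
  proof (cases "n (p @ [a]) = 0")
    case True
    then show ?thesis using np Xp Xnn[of "p @ [a]"] by (simp add: G_def)
  next
    case False
    then have npa: "0 < n (p @ [a])" using nn[of "p @ [a]"] by simp
    have Xpa: "0 < X (p @ [a])" using dom[of "p @ [a]"] npa W by (metis mult_pos_pos order_less_le_trans)
    have "n (p @ [a]) / n p - X (p @ [a]) / X p \<le> (n (p @ [a]) / n p) * ln ((n (p @ [a]) / n p) / (X (p @ [a]) / X p))"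
      using np npa Xp Xpa by (intro xlnx_ge) auto
    then have "n p * (n (p @ [a]) / n p - X (p @ [a]) / X p) \<le> n p * ((n (p @ [a]) / n p) * ln ((n (p @ [a]) / n p) / (X (p @ [a]) / X p)))"
      using np by (intro mult_left_mono) auto
    then have "n (p @ [a]) - n p * X (p @ [a]) / X p \<le> n p * t a"
      using np by (simp add: t_def cond_def algebra_simps)
    then show ?thesis using key[of a] by simp
  qed
  have Gnn: "0 \<le> G x" for x
  proof (cases "n x = 0")
    case False
    then have "0 < n x" using nn[of x] by simp
    then show ?thesis using G_alt[OF W _ dom[of x]] False by (simp add: G_def)
  qed (simp add: G_def)
  have Gle: "G (p @ [a]) \<le> X (p @ [a]) / W" for a
  proof (cases "n (p @ [a]) = 0")
    case True
    then show ?thesis using Xnn[of "p @ [a]"] W by (simp add: G_def)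
  next
    case False
    then have npa: "0 < n (p @ [a])" using nn[of "p @ [a]"] by simp
    have Xpa: "0 < X (p @ [a])" using dom[of "p @ [a]"] npa W by (metis mult_pos_pos order_less_le_trans)
    have "ln (X (p @ [a]) / (W * n (p @ [a]))) \<le> X (p @ [a]) / (W * n (p @ [a])) - 1"
      using Xpa npa W by (intro ln_le_minus_one) simp
    then have "n (p @ [a]) * ln (X (p @ [a]) / (W * n (p @ [a]))) \<le> n (p @ [a]) * (X (p @ [a]) / (W * n (p @ [a])) - 1)"
      using npa by (intro mult_left_mono) auto
    also have "\<dots> \<le> X (p @ [a]) / W" using npa W by (simp add: field_simps)
    finally show ?thesis using G_alt(1)[OF W npa dom] False by (simp add: G_def)
  qed
  have hXW: "((\<lambda>a. X (p @ [a]) / W) has_sum (X p / W)) UNIV"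
    using has_sum_cmult_left[OF hX, of "1 / W"] by simp
  have "(\<lambda>a. G (p @ [a])) summable_on UNIV"
    by (rule summable_on_comparison_test[of "\<lambda>a. X (p @ [a]) / W"])
       (use hXW Gle Gnn in \<open>auto simp: summable_on_def\<close>)
  then obtain SG where hG: "((\<lambda>a. G (p @ [a])) has_sum SG) UNIV"
    by (auto simp: summable_on_def)
  have hK: "((\<lambda>a. n (p @ [a]) * K) has_sum (n p * K)) UNIV"
    by (rule has_sum_cmult_left[OF hn])
  have hdiff: "((\<lambda>a. n (p @ [a]) * K - G (p @ [a])) has_sum (n p * K - SG)) UNIV"
    by (rule has_sum_diff_real[OF hK hG])
  have "((\<lambda>a. (1 / n p) * (n (p @ [a]) * K - G (p @ [a]))) has_sum ((1 / n p) * (n p * K - SG))) UNIV"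
    by (rule has_sum_cmult_right[OF hdiff])
  moreover have "(1 / n p) * (n (p @ [a]) * K - G (p @ [a])) = t a" for a
    using key[of a] np by (simp add: field_simps)
  ultimately have ht: "(t has_sum ((1 / n p) * (n p * K - SG))) UNIV" by simp
  have Dv: "D = (1 / n p) * (n p * K - SG)"
  proof -
    have "D = infsum t UNIV" unfolding D_def t_def[abs_def] by (rule refl)
    then show ?thesis using infsumI[OF ht] by simp
  qed
  have npD: "n p * D = n p * K - SG" using np Dv by simp
  have h0: "((\<lambda>a. n (p @ [a]) - n p * X (p @ [a]) / X p) has_sum (n p - n p * X p / X p)) UNIV"
    using has_sum_diff_real[OF hn has_sum_cmult_right[OF hXW, of "n p * W / X p"]]
    using W Xp by (simp add: field_simps)
  have "n p - n p * X p / X p \<le> n p * K - SG"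
    by (rule has_sum_mono[OF h0 hdiff]) (use ineq in auto)
  then have "0 \<le> n p * D" using npD Xp by simp
  then have "0 \<le> D" using np by (simp add: zero_le_mult_iff)
  moreover have "SG = G p - n p * D" using npD Gp by simp
  ultimately show ?thesis using hG by simp
qed



lemma cyl_sets: "cyl x \<in> sets seqS"
proof -
  have "cyl x = stake (length x) -` {x} \<inter> space seqS"
    by (auto simp: cyl_def space_stream_space)
  also have "\<dots> \<in> sets seqS"
    by (rule measurable_sets[OF measurable_stake]) simp
  finally show ?thesis .
qed

lemma mem_cyl_snoc: "\<omega> \<in> cyl (p @ [a]) \<longleftrightarrow> \<omega> \<in> cyl p \<and> \<omega> !! length p = a"
proof -
  have "stake (length (p @ [a])) \<omega> = stake (length p) \<omega> @ [\<omega> !! length p]"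
    by (simp only: length_append_singleton stake_Suc)
  then show ?thesis by (auto simp: cyl_def)
qed

lemma cyl_split: "cyl p = (\<Union>a. cyl (p @ [a]))" "disjoint_family (\<lambda>a. cyl (p @ [a]))"
  by (auto simp: mem_cyl_snoc disjoint_family_on_def)

lemma mcyl_additive:
  assumes "prob_space \<rho>" "sets \<rho> = sets seqS"
  shows "((\<lambda>a. mcyl \<rho> (p @ [a])) has_sum mcyl \<rho> p) UNIV"
proof -
  interpret prob_space \<rho> by fact
  have cs: "cyl x \<in> sets \<rho>" for x using cyl_sets assms(2) by simp
  have "emeasure \<rho> (cyl p) = emeasure \<rho> (\<Union>a. cyl (p @ [a]))" using cyl_split(1) by metis
  also have "\<dots> = (\<integral>\<^sup>+ a. emeasure \<rho> (cyl (p @ [a])) \<partial>count_space UNIV)"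
    by (rule emeasure_UN_countable) (use cs cyl_split(2) in auto)
  also have "\<dots> = infsum (\<lambda>a. emeasure \<rho> (cyl (p @ [a]))) UNIV"
    by (rule infsum_nn_count[symmetric]) simp
  finally have "infsum (\<lambda>a. ennreal (mcyl \<rho> (p @ [a]))) UNIV = ennreal (mcyl \<rho> p)"
    by (simp add: mcyl_def emeasure_eq_measure)
  then show ?thesis by (intro real_has_sum_from_ennreal) (auto simp: mcyl_def)
qed

lemma mcyl_mono:
  assumes "prob_space \<rho>" "sets \<rho> = sets seqS"
  shows "mcyl \<rho> (p @ [a]) \<le> mcyl \<rho> p"
proof -
  interpret prob_space \<rho> by fact
  have cs: "cyl x \<in> sets \<rho>" for x using cyl_sets assms(2) by simp
  show ?thesis unfolding mcyl_def
    by (rule finite_measure_mono) (auto simp: mem_cyl_snoc cs)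
qed

locale setting =
  fixes Ms :: "'a::countable stream measure set"
    and w :: "'a stream measure \<Rightarrow> real"
    and \<nu> :: "'a stream measure"
  assumes cMs: "countable Ms"
    and probs: "\<forall>\<rho>\<in>Ms. prob_space \<rho> \<and> sets \<rho> = sets seqS"
    and wpos: "\<forall>\<rho>\<in>Ms. 0 < w \<rho> \<and> w \<rho> \<le> 1"
    and hw: "(w has_sum 1) Ms"
    and nuM: "\<nu> \<in> Ms"
begin

lemma xicyl_eq: "xicyl Ms w x = (\<Sum>\<^sub>\<infinity>\<rho>\<in>Ms. w \<rho> * mcyl \<rho> x)"
  by (simp add: xicyl_def xi_def mcyl_def)

lemma term_nn: "\<rho> \<in> Ms \<Longrightarrow> 0 \<le> w \<rho> * mcyl \<rho> x"
  using wpos by (auto simp: mcyl_def)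

lemma term_le: "\<rho> \<in> Ms \<Longrightarrow> w \<rho> * mcyl \<rho> x \<le> w \<rho>"
proof -
  assume r: "\<rho> \<in> Ms"
  then interpret prob_space \<rho> using probs by auto
  have "mcyl \<rho> x \<le> 1" by (simp add: mcyl_def)
  then show ?thesis using wpos r by (simp add: mult_left_le)
qed

lemma xi_summable: "(\<lambda>\<rho>. w \<rho> * mcyl \<rho> x) summable_on Ms"
  by (rule summable_on_comparison_test[of w]) (use hw term_nn term_le in \<open>auto simp: summable_on_def\<close>)

lemma xi_dom: "w \<nu> * mcyl \<nu> x \<le> xicyl Ms w x"
proof -
  have "infsum (\<lambda>\<rho>. w \<rho> * mcyl \<rho> x) {\<nu>} \<le> infsum (\<lambda>\<rho>. w \<rho> * mcyl \<rho> x) Ms"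
  proof (rule infsum_mono_neutral)
    show "(\<lambda>\<rho>. w \<rho> * mcyl \<rho> x) summable_on {\<nu>}" by (rule summable_on_finite) simp
    show "(\<lambda>\<rho>. w \<rho> * mcyl \<rho> x) summable_on Ms" by (rule xi_summable)
    show "\<And>y. y \<in> {\<nu>} - Ms \<Longrightarrow> w y * mcyl y x \<le> 0" using nuM by simp
    show "\<And>y. y \<in> Ms - {\<nu>} \<Longrightarrow> 0 \<le> w y * mcyl y x" using term_nn by simp
  qed simp
  then show ?thesis by (simp add: xicyl_eq)
qed

lemma n_nn: "0 \<le> mcyl \<nu> x" by (simp add: mcyl_def)

lemma xi_additive: "((\<lambda>a. xicyl Ms w (p @ [a])) has_sum xicyl Ms w p) UNIV"
proof -
  have e1: "ennreal (xicyl Ms w x) = (\<integral>\<^sup>+ \<rho>. ennreal (w \<rho> * mcyl \<rho> x) \<partial>count_space Ms)" for x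
    unfolding xicyl_eq
    by (simp add: ennreal_infsum_real[OF xi_summable term_nn] infsum_nn_count[OF cMs])
  have inner: "(\<integral>\<^sup>+ a. ennreal (w \<rho> * mcyl \<rho> (p @ [a])) \<partial>count_space UNIV) = ennreal (w \<rho> * mcyl \<rho> p)"
    if r: "\<rho> \<in> Ms" for \<rho>
  proof -
    have h: "((\<lambda>a. w \<rho> * mcyl \<rho> (p @ [a])) has_sum (w \<rho> * mcyl \<rho> p)) UNIV"
    proof -
      have "((\<lambda>a. mcyl \<rho> (p @ [a])) has_sum mcyl \<rho> p) UNIV" using mcyl_additive probs r by auto
      from has_sum_cmult_right[OF this, of "w \<rho>"] show ?thesis .
    qed
    have "(\<integral>\<^sup>+ a. ennreal (w \<rho> * mcyl \<rho> (p @ [a])) \<partial>count_space UNIV)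
        = infsum (\<lambda>a. ennreal (w \<rho> * mcyl \<rho> (p @ [a]))) UNIV"
      by (rule infsum_nn_count[symmetric]) simp
    also have "\<dots> = ennreal (infsum (\<lambda>a. w \<rho> * mcyl \<rho> (p @ [a])) UNIV)"
      by (rule ennreal_infsum_real[symmetric]) (use h term_nn r in \<open>auto simp: summable_on_def\<close>)
    also have "\<dots> = ennreal (w \<rho> * mcyl \<rho> p)" using infsumI[OF h] by simp
    finally show ?thesis .
  qed
  have "infsum (\<lambda>a. ennreal (xicyl Ms w (p @ [a]))) UNIV
      = (\<integral>\<^sup>+ a. (\<integral>\<^sup>+ \<rho>. ennreal (w \<rho> * mcyl \<rho> (p @ [a])) \<partial>count_space Ms) \<partial>count_space UNIV)"
    by (simp add: e1 infsum_nn_count)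
  also have "\<dots> = (\<integral>\<^sup>+ \<rho>. (\<integral>\<^sup>+ a. ennreal (w \<rho> * mcyl \<rho> (p @ [a])) \<partial>count_space UNIV) \<partial>count_space Ms)"
    by (rule nn_integral_count_space_nn_integral) (auto simp: cMs)
  also have "\<dots> = (\<integral>\<^sup>+ \<rho>. ennreal (w \<rho> * mcyl \<rho> p) \<partial>count_space Ms)"
    by (rule nn_integral_cong) (simp add: inner)
  also have "\<dots> = ennreal (xicyl Ms w p)" by (simp add: e1)
  finally show ?thesis
    by (intro real_has_sum_from_ennreal) (auto simp: xicyl_eq intro!: infsum_nonneg term_nn)
qed

lemma nu_prob: "prob_space \<nu>" and nu_sets: "sets \<nu> = sets seqS"
  using probs nuM by auto

definition G :: "'a list \<Rightarrow> real" where
  "G x = (if mcyl \<nu> x = 0 then 0 else mcyl \<nu> x * (ln (1 / w \<nu>) + ln (xicyl Ms w x / mcyl \<nu> x)))"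

definition dK :: "'a list \<Rightarrow> real" where
  "dK x = (\<Sum>\<^sub>\<infinity>a\<in>UNIV. cond (mcyl \<nu>) [a] x * ln (cond (mcyl \<nu>) [a] x / cond (xicyl Ms w) [a] x))"

lemma dKL_eq: "dKL Ms w \<nu> s \<omega> = dK (stake (s - 1) \<omega>)"
  by (simp add: dKL_def dK_def)

lemma step_ennreal:
  "ennreal (dK p) * ennreal (mcyl \<nu> p) + infsum (\<lambda>a. ennreal (G (p @ [a]))) UNIV = ennreal (G p)"
proof -
  have W: "0 < w \<nu>" using wpos nuM by auto
  have ks: "((\<lambda>a. G (p @ [a])) has_sum (G p - mcyl \<nu> p * dK p)) UNIV \<and> 0 \<le> dK p"
    unfolding G_def dK_def
    by (rule kl_step[OF W n_nn xi_dom mcyl_mono[OF nu_prob nu_sets]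
          mcyl_additive[OF nu_prob nu_sets] xi_additive])
  have Gnn: "0 \<le> G x" for x
  proof (cases "mcyl \<nu> x = 0")
    case False
    then have "0 < mcyl \<nu> x" using n_nn[of x] by simp
    then show ?thesis using G_alt[OF W _ xi_dom[of x]] False by (simp add: G_def)
  qed (simp add: G_def)
  have hG: "((\<lambda>a. G (p @ [a])) has_sum (G p - mcyl \<nu> p * dK p)) UNIV" using ks by simp
  have D0: "0 \<le> dK p" using ks by simp
  have A0: "0 \<le> G p - mcyl \<nu> p * dK p"
    by (rule has_sum_nonneg[OF hG]) (simp add: Gnn)
  have sm: "(\<lambda>a. G (p @ [a])) summable_on UNIV" using hG by (auto simp: summable_on_def)
  have "infsum (\<lambda>a. ennreal (G (p @ [a]))) UNIV = ennreal (infsum (\<lambda>a. G (p @ [a])) UNIV)"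
    by (rule ennreal_infsum_real[symmetric, OF sm]) (simp add: Gnn)
  also have "\<dots> = ennreal (G p - mcyl \<nu> p * dK p)" by (simp add: infsumI[OF hG])
  finally have e: "infsum (\<lambda>a. ennreal (G (p @ [a]))) UNIV = ennreal (G p - mcyl \<nu> p * dK p)" .
  have "ennreal (dK p) * ennreal (mcyl \<nu> p) = ennreal (dK p * mcyl \<nu> p)"
    by (rule ennreal_mult[symmetric]) (use D0 n_nn in auto)
  also have "\<dots> + ennreal (G p - mcyl \<nu> p * dK p) = ennreal (dK p * mcyl \<nu> p + (G p - mcyl \<nu> p * dK p))"
    by (rule ennreal_plus[symmetric]) (use D0 n_nn[of p] A0 in auto)
  also have "\<dots> = ennreal (G p)" by (simp add: algebra_simps)
  finally show ?thesis using e by simp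
qed

end


lemma Flt_sat:
  assumes "S \<in> Flt n"
  shows "stake (n - 1) \<omega> = stake (n - 1) \<omega>' \<Longrightarrow> \<omega> \<in> S \<longleftrightarrow> \<omega>' \<in> S"
  using assms unfolding Flt_def
proof (induction S arbitrary: \<omega> \<omega>' rule: sigma_sets.induct)
  case (Basic a)
  then obtain x where "a = cyl x" "length x = n - 1" by auto
  then show ?case using Basic.prems by (auto simp: cyl_def)
next
  case Empty
  then show ?case by simp
next
  case (Compl a)
  then show ?case by blast
next
  case (Union A)
  then show ?case by blast
qed

lemma Aset_mem:
  assumes st: "stopping_time t" and tw: "t \<omega> = enat N"
  shows "stake (N - 1) \<omega> \<in> Aset t" and "1 \<le> N"
proof -
  have "1 \<le> t \<omega>" using st by (simp add: stopping_time_def)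
  then show N1: "1 \<le> N" using tw by (simp add: one_enat_def)
  have S: "t -` {enat N} \<in> Flt N" using st N1 by (simp add: stopping_time_def)
  show "stake (N - 1) \<omega> \<in> Aset t"
    unfolding Aset_def
  proof (intro CollectI allI)
    fix \<omega>'' :: "'a stream"
    let ?p = "stake (N - 1) \<omega>"
    have "stake (N - 1) (?p @- \<omega>'') = stake (N - 1) \<omega>" by (simp add: stake_shift)
    then have "?p @- \<omega>'' \<in> t -` {enat N}" using Flt_sat[OF S, of \<omega> "?p @- \<omega>''"] tw by simp
    then show "t (?p @- \<omega>'') = enat (length ?p + 1)" using N1 by simp
  qed
qed

lemma sum_infsum_swap_ennreal:
  fixes f :: "'a::countable \<Rightarrow> 'b \<Rightarrow> ennreal"
  assumes "finite K"
  shows "(\<Sum>k\<in>K. infsum (\<lambda>a. f a k) UNIV) = infsum (\<lambda>a. \<Sum>k\<in>K. f a k) UNIV"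
proof -
  have "(\<Sum>k\<in>K. infsum (\<lambda>a. f a k) UNIV) = (\<Sum>k\<in>K. \<integral>\<^sup>+ a. f a k \<partial>count_space UNIV)"
    by (simp add: infsum_nn_count)
  also have "\<dots> = (\<integral>\<^sup>+ a. (\<Sum>k\<in>K. f a k) \<partial>count_space UNIV)"
    by (rule nn_integral_sum[symmetric]) simp
  also have "\<dots> = infsum (\<lambda>a. \<Sum>k\<in>K. f a k) UNIV"
    by (simp add: infsum_nn_count)
  finally show ?thesis .
qed

context setting
begin

lemma cyl_sets_nu[measurable]: "cyl x \<in> sets \<nu>"
  using cyl_sets nu_sets by simp

lemma dKL_meas[measurable]: "(\<lambda>\<omega>. ennreal (dKL Ms w \<nu> s \<omega>)) \<in> borel_measurable \<nu>"
proof -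
  have "(\<lambda>\<omega>. ennreal (dK (stake (s - 1) \<omega>))) \<in> borel_measurable seqS"
    by (rule measurable_compose[OF measurable_stake]) simp
  moreover have "measurable \<nu> (borel :: ennreal measure) = measurable seqS borel"
    by (rule measurable_cong_sets[OF nu_sets refl])
  ultimately show ?thesis by (simp add: dKL_eq)
qed

definition J :: "'a list \<Rightarrow> nat \<Rightarrow> ennreal" where
  "J p s = (\<integral>\<^sup>+ \<omega>. indicator (cyl p) \<omega> * (if length p < s then ennreal (dKL Ms w \<nu> s \<omega>) else 0) \<partial>\<nu>)"

lemma J_low: "s \<le> length p \<Longrightarrow> J p s = 0"
  by (simp add: J_def)

lemma J_top: "J p (Suc (length p)) = ennreal (dK p) * ennreal (mcyl \<nu> p)"
proof -
  interpret prob_space \<nu> by (rule nu_prob)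
  have "J p (Suc (length p)) = (\<integral>\<^sup>+ \<omega>. ennreal (dK p) * indicator (cyl p) \<omega> \<partial>\<nu>)"
    unfolding J_def
    by (rule nn_integral_cong) (auto simp: dKL_eq cyl_def split: split_indicator)
  also have "\<dots> = ennreal (dK p) * emeasure \<nu> (cyl p)"
    by (rule nn_integral_cmult_indicator) simp
  finally show ?thesis by (simp add: emeasure_eq_measure mcyl_def)
qed

lemma J_split:
  assumes "Suc (length p) < s"
  shows "J p s = infsum (\<lambda>a. J (p @ [a]) s) UNIV"
proof -
  let ?g = "\<lambda>\<omega>. ennreal (dKL Ms w \<nu> s \<omega>)"
  have Jp: "J p s = (\<integral>\<^sup>+ \<omega>. indicator (cyl p) \<omega> * ?g \<omega> \<partial>\<nu>)"
    using assms by (simp add: J_def)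
  have Jpa: "J (p @ [a]) s = (\<integral>\<^sup>+ \<omega>. indicator (cyl (p @ [a])) \<omega> * ?g \<omega> \<partial>\<nu>)" for a
    using assms by (simp add: J_def)
  have pw: "indicator (cyl p) \<omega> * ?g \<omega> = (\<integral>\<^sup>+ a. indicator (cyl (p @ [a])) \<omega> * ?g \<omega> \<partial>count_space UNIV)" for \<omega>
  proof (cases "\<omega> \<in> cyl p")
    case True
    have "(\<integral>\<^sup>+ a. indicator (cyl (p @ [a])) \<omega> * ?g \<omega> \<partial>count_space UNIV)
        = (\<Sum>a\<in>{\<omega> !! length p}. indicator (cyl (p @ [a])) \<omega> * ?g \<omega>)"
      by (rule nn_integral_count_space') (auto simp: mem_cyl_snoc split: split_indicator)
    then show ?thesis using True by (simp add: mem_cyl_snoc)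
  next
    case False
    then show ?thesis by (simp add: mem_cyl_snoc)
  qed
  have "J p s = (\<integral>\<^sup>+ \<omega>. (\<integral>\<^sup>+ a. indicator (cyl (p @ [a])) \<omega> * ?g \<omega> \<partial>count_space UNIV) \<partial>\<nu>)"
    unfolding Jp by (simp add: pw)
  also have "\<dots> = (\<integral>\<^sup>+ a. (\<integral>\<^sup>+ \<omega>. indicator (cyl (p @ [a])) \<omega> * ?g \<omega> \<partial>\<nu>) \<partial>count_space UNIV)"
    by (rule nn_integral_count_space_nn_integral) auto
  also have "\<dots> = infsum (\<lambda>a. J (p @ [a]) s) UNIV"
    by (simp add: Jpa infsum_nn_count)
  finally show ?thesis .
qed

lemma J_decomp:
  "J p s = (if s = Suc (length p) then J p (Suc (length p)) else 0) + infsum (\<lambda>a. J (p @ [a]) s) UNIV"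
proof -
  consider "s \<le> length p" | "s = Suc (length p)" | "Suc (length p) < s" by linarith
  then show ?thesis
  proof cases
    case 1
    then show ?thesis by (simp add: J_low)
  next
    case 2
    then show ?thesis by (simp add: J_low)
  next
    case 3
    then show ?thesis using J_split by simp
  qed
qed

lemma J_bound: "(\<Sum>s<length p + k. J p s) \<le> ennreal (G p)"
proof (induction k arbitrary: p)
  case 0
  then show ?case by (simp add: J_low)
next
  case (Suc k)
  have "(\<Sum>s<length p + Suc k. J p s)
      = (\<Sum>s<length p + Suc k. (if s = Suc (length p) then J p (Suc (length p)) else 0))
        + (\<Sum>s<length p + Suc k. infsum (\<lambda>a. J (p @ [a]) s) UNIV)"
    by (subst J_decomp) (simp add: sum.distrib)
  also have "\<dots> \<le> J p (Suc (length p)) + infsum (\<lambda>a. ennreal (G (p @ [a]))) UNIV"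
  proof (rule add_mono)
    show "(\<Sum>s<length p + Suc k. (if s = Suc (length p) then J p (Suc (length p)) else 0)) \<le> J p (Suc (length p))"
      by (simp add: sum.delta)
    have "(\<Sum>s<length p + Suc k. infsum (\<lambda>a. J (p @ [a]) s) UNIV)
        = infsum (\<lambda>a. \<Sum>s<length (p @ [a]) + k. J (p @ [a]) s) UNIV"
    proof -
      have eq: "\<And>a. length (p @ [a]) + k = length p + Suc k" by simp
      show ?thesis unfolding eq by (rule sum_infsum_swap_ennreal) simp
    qed
    also have "\<dots> \<le> infsum (\<lambda>a. ennreal (G (p @ [a]))) UNIV"
      by (rule infsum_mono, simp add: nonneg_summable_on_complete,
          simp add: nonneg_summable_on_complete, rule Suc.IH)
    finally show "(\<Sum>s<length p + Suc k. infsum (\<lambda>a. J (p @ [a]) s) UNIV) \<le> infsum (\<lambda>a. ennreal (G (p @ [a]))) UNIV" .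
  qed
  also have "\<dots> = ennreal (G p)" using step_ennreal[of p] by (simp add: J_top)
  finally show ?case .
qed

lemma per_p:
  "(\<integral>\<^sup>+ \<omega>. indicator (cyl p) \<omega> * (\<Sum>s. if length p < s then ennreal (dKL Ms w \<nu> s \<omega>) else 0) \<partial>\<nu>)
     \<le> ennreal (G p)"
proof -
  have "(\<integral>\<^sup>+ \<omega>. indicator (cyl p) \<omega> * (\<Sum>s. if length p < s then ennreal (dKL Ms w \<nu> s \<omega>) else 0) \<partial>\<nu>)
      = (\<integral>\<^sup>+ \<omega>. (\<Sum>s. indicator (cyl p) \<omega> * (if length p < s then ennreal (dKL Ms w \<nu> s \<omega>) else 0)) \<partial>\<nu>)"
    by (simp add: ennreal_suminf_cmult)
  also have "\<dots> = (\<Sum>s. J p s)"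
    unfolding J_def by (rule nn_integral_suminf) measurable
  also have "\<dots> \<le> ennreal (G p)"
  proof (rule suminf_le_const)
    show "summable (J p)" by simp
    fix N
    have "(\<Sum>s<N. J p s) \<le> (\<Sum>s<length p + N. J p s)"
      by (rule sum_mono2) auto
    also have "\<dots> \<le> ennreal (G p)" by (rule J_bound)
    finally show "(\<Sum>s<N. J p s) \<le> ennreal (G p)" .
  qed
  finally show ?thesis .
qed

end

theorem lemma5:
  fixes Ms :: "'a::countable stream measure set"
    and w :: "'a stream measure \<Rightarrow> real"
    and \<nu> :: "'a stream measure"
    and t t' :: "'a stream \<Rightarrow> enat"
  assumes "countable Ms"
    and "\<forall>\<rho>\<in>Ms. prob_space \<rho> \<and> sets \<rho> = sets seqS"
    and "\<forall>\<rho>\<in>Ms. 0 < w \<rho> \<and> w \<rho> \<le> 1"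
    and "(w has_sum 1) Ms"
    and "\<nu> \<in> Ms"
    and "stopping_time t" and "stopping_time t'"
    and "\<forall>\<omega>. t \<omega> \<le> t' \<omega>"
  shows "(\<integral>\<^sup>+ \<omega>. (\<Sum>s. if t \<omega> \<le> enat s \<and> enat s < t' \<omega>
                        then ennreal (dKL Ms w \<nu> s \<omega>) else 0) \<partial>\<nu>)
         \<le> (\<Sum>\<^sub>\<infinity>x\<in>Aset t. ennreal (if mcyl \<nu> x = 0 then 0 else
               mcyl \<nu> x * (ln (1 / w \<nu>) + ln (xicyl Ms w x / mcyl \<nu> x))))"
proof -
  interpret S: setting Ms w \<nu> by (rule setting.intro) (use assms in auto)
  define H where "H (p::'a list) \<omega> = (\<Sum>s. if length p < s then ennreal (dKL Ms w \<nu> s \<omega>) else 0)" for p \<omega>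
  have cA: "countable (Aset t)" by (rule countable_subset[OF subset_UNIV]) simp
  have pw: "(\<Sum>s. if t \<omega> \<le> enat s \<and> enat s < t' \<omega> then ennreal (dKL Ms w \<nu> s \<omega>) else 0)
      \<le> (\<integral>\<^sup>+ p. indicator (cyl p) \<omega> * H p \<omega> \<partial>count_space (Aset t))" for \<omega>
  proof (cases "t \<omega>")
    case (enat N)
    let ?p = "stake (N - 1) \<omega>"
    have pA: "?p \<in> Aset t" and N1: "1 \<le> N" using Aset_mem[OF assms(6) enat] by auto
    have "(\<Sum>s. if t \<omega> \<le> enat s \<and> enat s < t' \<omega> then ennreal (dKL Ms w \<nu> s \<omega>) else 0) \<le> H ?p \<omega>"
      unfolding H_def by (rule suminf_le) (use enat N1 in auto)
    also have "\<dots> = indicator (cyl ?p) \<omega> * H ?p \<omega>" by (simp add: cyl_def)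
    also have "\<dots> \<le> infsum (\<lambda>p. indicator (cyl p) \<omega> * H p \<omega>) (Aset t)"
      by (rule ennreal_infsum_ge_single[OF pA])
    also have "\<dots> = (\<integral>\<^sup>+ p. indicator (cyl p) \<omega> * H p \<omega> \<partial>count_space (Aset t))"
      by (rule infsum_nn_count[OF cA])
    finally show ?thesis .
  next
    case infinity
    then show ?thesis by simp
  qed
  have "(\<integral>\<^sup>+ \<omega>. (\<Sum>s. if t \<omega> \<le> enat s \<and> enat s < t' \<omega> then ennreal (dKL Ms w \<nu> s \<omega>) else 0) \<partial>\<nu>)
      \<le> (\<integral>\<^sup>+ \<omega>. (\<integral>\<^sup>+ p. indicator (cyl p) \<omega> * H p \<omega> \<partial>count_space (Aset t)) \<partial>\<nu>)"
    by (rule nn_integral_mono) (rule pw)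
  also have "\<dots> = (\<integral>\<^sup>+ p. (\<integral>\<^sup>+ \<omega>. indicator (cyl p) \<omega> * H p \<omega> \<partial>\<nu>) \<partial>count_space (Aset t))"
    by (rule nn_integral_count_space_nn_integral[OF cA]) (unfold H_def, measurable)
  also have "\<dots> \<le> (\<integral>\<^sup>+ p. ennreal (S.G p) \<partial>count_space (Aset t))"
    by (rule nn_integral_mono) (unfold H_def, rule S.per_p)
  also have "\<dots> = (\<Sum>\<^sub>\<infinity>x\<in>Aset t. ennreal (S.G x))"
    by (rule infsum_nn_count[OF cA, symmetric])
  finally show ?thesis by (simp add: S.G_def)
qed


end
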